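(* In the setup below, let $H\le\mathrm{SL}(P/Z)$, let $\varphi:H\to P$ be a map with $\varphi(hk)=\varphi(h)\,{}^h\varphi(k)$ for all $h,k\in H$, and let $S=\{\varphi(h)h : h\in H\}\le G$. Then $$N_P(S)=C_P(S)\le C_P(H)=N_P(H).$$
   Context: Setup: $p$ is an odd prime, $E$ is an extraspecial group of order $p^3$ and exponent $p$, $i\ge1$, and $P=E\circ C_{p^i}$ is the central product amalgamating $Z(E)$ with the subgroup of order $p$ of $C_{p^i}$; $Z:=Z(P)=C_{p^i}$. $\mathrm{SL}(P/Z)\cong\mathrm{SL}_2(\mathbb F_p)$ acts on $P$ by automorphisms fixing $Z$ pointwise and inducing the natural action on $P/Z\cong\mathbb F_p^2$ (with respect to a basis $\bar f_1,\bar f_2$, $f_1,f_2\in E$, the generators acting by $\begin{pmatrix}1&1\\0&1\end{pmatrix}: f_1\mapsto f_1, f_2\mapsto f_1f_2$ and $\begin{pmatrix}1&0\\1&1\end{pmatrix}: f_1\mapsto f_1f_2, f_2\mapsto f_2$). $G:=P\rtimes\mathrm{SL}(P/Z)$; ${}^gy=gyg^{-1}$. *)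

theory Defs
  imports "HOL-Algebra.Group_Action" "HOL-Computational_Algebra.Primes"
begin

text \<open>P = E o C_{p^i}: elements (a,b,z) stand for f1^a f2^b z with
 a,b in {0..<p} and z in C_{p^i} = Z/p^i (written additively).  The relation is
 f2 f1 = f1 f2 c with c = p^(i-1) the generator of the subgroup of order p of Z,
 so E = {(a,b,k*c)} is the extraspecial group of order p^3 and exponent p,
 and Z(E) is amalgamated with the subgroup of order p of C_{p^i}.\<close>

definition Pmul :: "nat \<Rightarrow> nat \<Rightarrow> int \<times> int \<times> int \<Rightarrow> int \<times> int \<times> int \<Rightarrow> int \<times> int \<times> int" where
  "Pmul p i x y = (case x of (a,b,z) \<Rightarrow> case y of (a',b',z') \<Rightarrow>
     ((a + a') mod int p, (b + b') mod int p, (z + z' + int p ^ (i - 1) * (a' * b)) mod (int p ^ i)))"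

definition Pgrp :: "nat \<Rightarrow> nat \<Rightarrow> (int \<times> int \<times> int) monoid" where
  "Pgrp p i = \<lparr>carrier = {0..<int p} \<times> {0..<int p} \<times> {0..<int p ^ i},
               monoid.mult = Pmul p i, one = (0,0,0)\<rparr>"

definition Zsub :: "nat \<Rightarrow> nat \<Rightarrow> (int \<times> int \<times> int) set" where
  "Zsub p i = {(0,0,z) | z. z \<in> {0..<int p ^ i}}"

text \<open>SL(P/Z) = SL_2(F_p): matrices (m11,m12,m21,m22) with entries in {0..<p}, acting on
 coordinate column vectors w.r.t. the basis f1-bar, f2-bar.\<close>

definition SLmul :: "nat \<Rightarrow> int \<times> int \<times> int \<times> int \<Rightarrow> int \<times> int \<times> int \<times> int \<Rightarrow> int \<times> int \<times> int \<times> int" where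
  "SLmul p A B = (case A of (a11,a12,a21,a22) \<Rightarrow> case B of (b11,b12,b21,b22) \<Rightarrow>
     ((a11*b11 + a12*b21) mod int p, (a11*b12 + a12*b22) mod int p,
      (a21*b11 + a22*b21) mod int p, (a21*b12 + a22*b22) mod int p))"

definition SLgrp :: "nat \<Rightarrow> (int \<times> int \<times> int \<times> int) monoid" where
  "SLgrp p = \<lparr>carrier = {(a,b,c,d). a \<in> {0..<int p} \<and> b \<in> {0..<int p} \<and> c \<in> {0..<int p}
                          \<and> d \<in> {0..<int p} \<and> (a*d - b*c) mod int p = 1},
              monoid.mult = SLmul p, one = (1,0,0,1)\<rparr>"

text \<open>The action of SL(P/Z) on P: (v,z) maps to (Mv, z + c*(Q(Mv) - Q(v))) where
 Q(v) = (v1 v2 - v1 - v2)/2 in F_p (p odd, 1/2 = (p+1)/2 mod p).  It fixes Z pointwise,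
 induces the natural action on P/Z, and on the generators it is exactly the one of the
 paper (see lemmas Pact_T_f1 etc. below).\<close>

definition Pact :: "nat \<Rightarrow> nat \<Rightarrow> int \<times> int \<times> int \<times> int \<Rightarrow> int \<times> int \<times> int \<Rightarrow> int \<times> int \<times> int" where
  "Pact p i M x = (case M of (m11,m12,m21,m22) \<Rightarrow> case x of (a,b,z) \<Rightarrow>
     (let w1 = (m11*a + m12*b) mod int p; w2 = (m21*a + m22*b) mod int p in
      (w1, w2, (z + int p ^ (i - 1) * ((int p + 1) div 2) * ((w1*w2 - w1 - w2) - (a*b - a - b)))
                 mod (int p ^ i))))"

definition Ggrp :: "nat \<Rightarrow> nat \<Rightarrow> ((int \<times> int \<times> int) \<times> (int \<times> int \<times> int \<times> int)) monoid" where
  "Ggrp p i = \<lparr>carrier = carrier (Pgrp p i) \<times> carrier (SLgrp p),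
     monoid.mult = (\<lambda>(x,g) (y,h). (Pmul p i x (Pact p i g y), SLmul p g h)),
     one = ((0,0,0),(1,0,0,1))\<rparr>"

definition embP :: "int \<times> int \<times> int \<Rightarrow> (int \<times> int \<times> int) \<times> (int \<times> int \<times> int \<times> int)" where
  "embP x = (x, (1,0,0,1))"

definition embSL :: "(int \<times> int \<times> int \<times> int) set \<Rightarrow> ((int \<times> int \<times> int) \<times> (int \<times> int \<times> int \<times> int)) set" where
  "embSL H = (\<lambda>h. ((0,0,0), h)) ` H"

definition NP :: "nat \<Rightarrow> nat \<Rightarrow> ((int \<times> int \<times> int) \<times> (int \<times> int \<times> int \<times> int)) set \<Rightarrow> (int \<times> int \<times> int) set" where
  "NP p i X = {x \<in> carrier (Pgrp p i). embP x \<in> normalizer (Ggrp p i) X}"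

definition CP :: "nat \<Rightarrow> nat \<Rightarrow> ((int \<times> int \<times> int) \<times> (int \<times> int \<times> int \<times> int)) set \<Rightarrow> (int \<times> int \<times> int) set" where
  "CP p i X = {x \<in> carrier (Pgrp p i). \<forall>s\<in>X. embP x \<otimes>\<^bsub>Ggrp p i\<^esub> s = s \<otimes>\<^bsub>Ggrp p i\<^esub> embP x}"

text \<open>Sanity checks: generators act as in the paper (f1 = (1,0,0), f2 = (0,1,0)).\<close>
lemma Pact_T_f1: "2 \<le> p \<Longrightarrow> Pact p i (1,1,0,1) (1,0,0) = (1,0,0)"
  by (simp add: Pact_def)
lemma Pact_T_f2: "3 \<le> p \<Longrightarrow> Pact p i (1,1,0,1) (0,1,0) = Pmul p i (1,0,0) (0,1,0)"
  by (simp add: Pact_def Pmul_def)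
lemma Pact_L_f1: "3 \<le> p \<Longrightarrow> Pact p i (1,0,1,1) (1,0,0) = Pmul p i (1,0,0) (0,1,0)"
  by (simp add: Pact_def Pmul_def)
lemma Pact_L_f2: "2 \<le> p \<Longrightarrow> Pact p i (1,0,1,1) (0,1,0) = (0,1,0)"
  by (simp add: Pact_def)

end

theory Submission imports Defs begin

lemma cmod:
  assumes "1 \<le> i" "(u::int) mod int p = v mod int p"
  shows "(int p^(i-1) * u) mod (int p^i) = (int p^(i-1) * v) mod (int p^i)"
proof -
  have q: "int p ^ i = int p^(i-1) * int p" using assms(1)
    by (metis One_nat_def Suc_pred less_eq_Suc_le power_Suc2)
  show ?thesis unfolding q mod_mult_mult1 using assms(2) by simp
qed

lemma Pgrp_group:
  assumes p: "2 \<le> p" and i: "1 \<le> i"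
  shows "group (Pgrp p i)"
proof (rule groupI)
  let ?c = "int p^(i-1)" and ?q = "int p ^ i"
  have qpos: "?q > 0" using p by simp
  have ppos: "int p > 0" using p by simp
  show "x \<otimes>\<^bsub>Pgrp p i\<^esub> y \<in> carrier (Pgrp p i)" if "x \<in> carrier (Pgrp p i)" "y \<in> carrier (Pgrp p i)" for x y
    using qpos ppos by (auto simp: Pgrp_def Pmul_def split: prod.splits)
  show "\<one>\<^bsub>Pgrp p i\<^esub> \<in> carrier (Pgrp p i)" using qpos ppos by (auto simp: Pgrp_def)
  show "\<one>\<^bsub>Pgrp p i\<^esub> \<otimes>\<^bsub>Pgrp p i\<^esub> x = x" if "x \<in> carrier (Pgrp p i)" for x
    using that by (auto simp: Pgrp_def Pmul_def split: prod.splits)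
  show "\<exists>y\<in>carrier (Pgrp p i). y \<otimes>\<^bsub>Pgrp p i\<^esub> x = \<one>\<^bsub>Pgrp p i\<^esub>" if "x \<in> carrier (Pgrp p i)" for x
  proof -
    obtain a b z where x: "x = (a,b,z)" by (cases x) auto
    define y where "y = ((-a) mod int p, (-b) mod int p, (- z - ?c * (a * ((-b) mod int p))) mod ?q)"
    have "y \<in> carrier (Pgrp p i)" using qpos ppos by (auto simp: y_def Pgrp_def)
    moreover have "y \<otimes>\<^bsub>Pgrp p i\<^esub> x = \<one>\<^bsub>Pgrp p i\<^esub>"
    proof -
      have "((- z - ?c * (a * ((-b) mod int p))) mod ?q + z + ?c * (a * ((-b) mod int p))) mod ?q
           = ((- z - ?c * (a * ((-b) mod int p))) + (z + ?c * (a * ((-b) mod int p)))) mod ?q"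
        unfolding add.assoc[of "_ mod ?q"] by (rule mod_add_left_eq)
      also have "\<dots> = 0" by simp
      finally have "((- z - ?c * (a * ((-b) mod int p))) mod ?q + z + ?c * (a * ((-b) mod int p))) mod ?q = 0" .
      moreover have "((-a) mod int p + a) mod int p = 0" "((-b) mod int p + b) mod int p = 0"
        by (simp_all add: mod_add_left_eq)
      ultimately show ?thesis by (simp add: x y_def Pgrp_def Pmul_def)
    qed
    ultimately show ?thesis by blast
  qed
  show "x \<otimes>\<^bsub>Pgrp p i\<^esub> y \<otimes>\<^bsub>Pgrp p i\<^esub> w = x \<otimes>\<^bsub>Pgrp p i\<^esub> (y \<otimes>\<^bsub>Pgrp p i\<^esub> w)"
    if "x \<in> carrier (Pgrp p i)" "y \<in> carrier (Pgrp p i)" "w \<in> carrier (Pgrp p i)" for x y w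
  proof -
    obtain a b z where x: "x = (a,b,z)" by (cases x) auto
    obtain a' b' z' where y: "y = (a',b',z')" by (cases y) auto
    obtain a'' b'' z'' where w: "w = (a'',b'',z'')" by (cases w) auto
    have e1: "(?c * (a'' * ((b + b') mod int p))) mod ?q = (?c * (a'' * (b + b'))) mod ?q"
      by (rule cmod[OF i]) (simp add: mod_mult_right_eq)
    have e2: "(?c * (((a' + a'') mod int p) * b)) mod ?q = (?c * ((a' + a'') * b)) mod ?q"
      by (rule cmod[OF i]) (simp add: mod_mult_left_eq)
    have l: "((z + z' + ?c * (a' * b)) mod ?q + z'' + ?c * (a'' * ((b + b') mod int p))) mod ?q
       = (z + z' + z'' + ?c * (a' * b) + ?c * (a'' * (b + b'))) mod ?q"
    proof -
      have "((z + z' + ?c * (a' * b)) mod ?q + z'' + ?c * (a'' * ((b + b') mod int p))) mod ?q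
         = ((z + z' + ?c * (a' * b)) + (z'' + ?c * (a'' * ((b + b') mod int p)))) mod ?q"
        unfolding add.assoc[of "_ mod ?q"] by (rule mod_add_left_eq)
      also have "\<dots> = ((z + z' + ?c * (a' * b) + z'') + (?c * (a'' * ((b + b') mod int p))) mod ?q) mod ?q"
        by (simp only: mod_add_right_eq add.assoc[symmetric])
      also have "\<dots> = ((z + z' + ?c * (a' * b) + z'') + (?c * (a'' * (b + b'))) mod ?q) mod ?q"
        using e1 by simp
      also have "\<dots> = ((z + z' + ?c * (a' * b) + z'') + ?c * (a'' * (b + b'))) mod ?q"
        by (rule mod_add_right_eq)
      finally show ?thesis by (simp add: algebra_simps)
    qed
    have r: "(z + (z' + z'' + ?c * (a'' * b')) mod ?q + ?c * (((a' + a'') mod int p) * b)) mod ?q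
       = (z + z' + z'' + ?c * (a' * b) + ?c * (a'' * (b + b'))) mod ?q"
    proof -
      have "(z + (z' + z'' + ?c * (a'' * b')) mod ?q + ?c * (((a' + a'') mod int p) * b)) mod ?q
          = (z + (z' + z'' + ?c * (a'' * b')) + ?c * ((a' + a'') * b)) mod ?q"
      proof -
        have "(z + (z' + z'' + ?c * (a'' * b')) mod ?q + ?c * (((a' + a'') mod int p) * b)) mod ?q
           = ((z + (z' + z'' + ?c * (a'' * b')) mod ?q) + (?c * (((a' + a'') mod int p) * b)) mod ?q) mod ?q"
          by (rule mod_add_right_eq[symmetric])
        also have "\<dots> = ((z + (z' + z'' + ?c * (a'' * b')) mod ?q) + (?c * ((a' + a'') * b)) mod ?q) mod ?q"
          using e2 by simp
        also have "\<dots> = ((z + (z' + z'' + ?c * (a'' * b')) mod ?q) + (?c * ((a' + a'') * b))) mod ?q"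
          by (rule mod_add_right_eq)
        also have "\<dots> = ((z' + z'' + ?c * (a'' * b')) mod ?q + (z + ?c * ((a' + a'') * b))) mod ?q"
          by (simp add: algebra_simps)
        also have "\<dots> = ((z' + z'' + ?c * (a'' * b')) + (z + ?c * ((a' + a'') * b))) mod ?q"
          by (rule mod_add_left_eq)
        finally show ?thesis by (simp add: algebra_simps)
      qed
      also have "\<dots> = (z + z' + z'' + ?c * (a' * b) + ?c * (a'' * (b + b'))) mod ?q"
        by (simp add: algebra_simps)
      finally show ?thesis .
    qed
    show ?thesis
      using l r by (simp add: x y w Pgrp_def Pmul_def mod_add_left_eq mod_add_right_eq add.assoc)
  qed
qed

lemma Pcar: "x \<in> carrier (Pgrp p i) \<longleftrightarrow> x \<in> {0..<int p} \<times> {0..<int p} \<times> {0..<int p ^ i}"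
  by (simp add: Pgrp_def)

lemma Pinv:
  assumes p: "2 \<le> p" and i: "1 \<le> i" and x: "(a,b,z) \<in> carrier (Pgrp p i)"
  shows "inv\<^bsub>Pgrp p i\<^esub> (a,b,z) = ((-a) mod int p, (-b) mod int p,
            (- z - int p^(i-1) * (a * ((-b) mod int p))) mod int p ^ i)"
proof -
  let ?c = "int p^(i-1)" and ?q = "int p ^ i"
  have qpos: "?q > 0" using p by simp
  have ppos: "int p > 0" using p by simp
  define y where "y = ((-a) mod int p, (-b) mod int p, (- z - ?c * (a * ((-b) mod int p))) mod ?q)"
  have yc: "y \<in> carrier (Pgrp p i)" using qpos ppos by (auto simp: y_def Pgrp_def)
  have "y \<otimes>\<^bsub>Pgrp p i\<^esub> (a,b,z) = \<one>\<^bsub>Pgrp p i\<^esub>"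
  proof -
    have "((- z - ?c * (a * ((-b) mod int p))) mod ?q + z + ?c * (a * ((-b) mod int p))) mod ?q
         = ((- z - ?c * (a * ((-b) mod int p))) + (z + ?c * (a * ((-b) mod int p)))) mod ?q"
      unfolding add.assoc[of "_ mod ?q"] by (rule mod_add_left_eq)
    also have "\<dots> = 0" by simp
    finally have "((- z - ?c * (a * ((-b) mod int p))) mod ?q + z + ?c * (a * ((-b) mod int p))) mod ?q = 0" .
    moreover have "((-a) mod int p + a) mod int p = 0" "((-b) mod int p + b) mod int p = 0"
      by (simp_all add: mod_add_left_eq)
    ultimately show ?thesis by (simp add: y_def Pgrp_def Pmul_def)
  qed
  then show ?thesis using group.inv_equality[OF Pgrp_group[OF p i] _ x yc] by (simp add: y_def)
qed

lemma Pact_id: "2 \<le> p \<Longrightarrow> y \<in> carrier (Pgrp p i) \<Longrightarrow> Pact p i (1,0,0,1) y = y"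
  by (auto simp: Pgrp_def Pact_def)

lemma Pact_closed: "2 \<le> p \<Longrightarrow> Pact p i h y \<in> carrier (Pgrp p i)"
  by (auto simp: Pgrp_def Pact_def Let_def split: prod.splits)

lemma SLcar: "h \<in> carrier (SLgrp p) \<Longrightarrow> h \<in> {0..<int p} \<times> {0..<int p} \<times> {0..<int p} \<times> {0..<int p}"
  by (auto simp: SLgrp_def)

lemma SL_idl: "h \<in> carrier (SLgrp p) \<Longrightarrow> SLmul p (1,0,0,1) h = h"
  by (auto simp: SLgrp_def SLmul_def)

lemma SL_idr: "h \<in> carrier (SLgrp p) \<Longrightarrow> SLmul p h (1,0,0,1) = h"
  by (auto simp: SLgrp_def SLmul_def)

lemma SL_one: "2 \<le> p \<Longrightarrow> (1,0,0,1) \<in> carrier (SLgrp p)"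
  by (auto simp: SLgrp_def)

lemma Pact_fix:
  assumes "(a,b,z) \<in> carrier (Pgrp p i)"
    and "fst (Pact p i h (a,b,z)) = a" "fst (snd (Pact p i h (a,b,z))) = b"
  shows "Pact p i h (a,b,z) = (a,b,z)"
  using assms by (auto simp: Pgrp_def Pact_def Let_def split: prod.splits)

lemma modsolve: "((s::int) + t) mod m = r mod m \<Longrightarrow> t mod m = (r - s) mod m"
  by (metis add_diff_cancel_left' mod_diff_left_eq)

lemma Gmul: "(x,g) \<otimes>\<^bsub>Ggrp p i\<^esub> (y,h) = (Pmul p i x (Pact p i g y), SLmul p g h)"
  by (simp add: Ggrp_def)

lemma Pmul_eq: "monoid.mult (Pgrp p i) = Pmul p i"
  by (simp add: Pgrp_def)

lemma neg_fix:
  assumes p: "2 \<le> p" and i: "1 \<le> i" and y: "y \<in> carrier (Pgrp p i)"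
    and fx: "Pact p i h y = y"
  shows "Pact p i h (inv\<^bsub>Pgrp p i\<^esub> y) = inv\<^bsub>Pgrp p i\<^esub> y"
proof -
  obtain a b z where yy: "y = (a,b,z)" by (cases y) auto
  obtain m11 m12 m21 m22 where hh: "h = (m11,m12,m21,m22)" by (cases h) auto
  have e1: "(m11*a + m12*b) mod int p = a" and e2: "(m21*a + m22*b) mod int p = b"
    using fx by (auto simp: yy hh Pact_def Let_def)
  have key: "(m*((-a) mod int p) + n*((-b) mod int p)) mod int p = (-a') mod int p"
    if "(m*a + n*b) mod int p = a'" for m n a'
  proof -
    have "(m*((-a) mod int p) + n*((-b) mod int p)) mod int p = (m*(-a) + n*(-b)) mod int p"
      by (intro mod_add_cong mod_mult_cong) simp_all
    also have "\<dots> = (-(m*a + n*b)) mod int p" by (simp add: algebra_simps)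
    also have "\<dots> = (-((m*a + n*b) mod int p)) mod int p" by (simp add: mod_minus_eq)
    finally show ?thesis using that by simp
  qed
  have iv: "inv\<^bsub>Pgrp p i\<^esub> y = ((-a) mod int p, (-b) mod int p,
            (- z - int p^(i-1) * (a * ((-b) mod int p))) mod int p ^ i)"
    using Pinv[OF p i] y yy by simp
  have ic: "inv\<^bsub>Pgrp p i\<^esub> y \<in> carrier (Pgrp p i)"
    using group.inv_closed[OF Pgrp_group[OF p i] y] .
  show ?thesis unfolding iv
    by (rule Pact_fix) (use ic iv key[OF e1] key[OF e2] in \<open>auto simp: hh Pact_def Let_def\<close>)
qed

lemma C_fix:
  assumes p: "2 \<le> p" and x: "x \<in> carrier (Pgrp p i)" and f: "f \<in> carrier (Pgrp p i)"
    and C: "Pmul p i x f = Pmul p i f (Pact p i h x)"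
  shows "Pact p i h x = x"
proof -
  obtain a b z where xx: "x = (a,b,z)" by (cases x) auto
  obtain fa fb fz where ff: "f = (fa,fb,fz)" by (cases f) auto
  obtain w1 w2 w3 where ww: "Pact p i h x = (w1,w2,w3)" by (cases "Pact p i h x") auto
  have wc: "(w1,w2,w3) \<in> carrier (Pgrp p i)" using Pact_closed[OF p] ww by metis
  have "(fa + a) mod int p = (fa + w1) mod int p" "(fb + b) mod int p = (fb + w2) mod int p"
    using C unfolding ww by (auto simp: xx ff Pmul_def add.commute)
  then have "a mod int p = w1 mod int p" "b mod int p = w2 mod int p"
    by (auto dest!: modsolve)
  then have "a = w1" "b = w2" using x wc by (auto simp: xx Pgrp_def)
  then show ?thesis using Pact_fix[of a b z p i h] x ww xx by simp
qed

lemma N_fix: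
  assumes p: "2 \<le> p" and i: "1 \<le> i" and x: "x \<in> carrier (Pgrp p i)" and f: "f \<in> carrier (Pgrp p i)"
    and N: "Pmul p i (Pmul p i x f) (Pact p i h (inv\<^bsub>Pgrp p i\<^esub> x)) = f"
  shows "Pact p i h (inv\<^bsub>Pgrp p i\<^esub> x) = inv\<^bsub>Pgrp p i\<^esub> x"
proof -
  obtain a b z where xx: "x = (a,b,z)" by (cases x) auto
  obtain fa fb fz where ff: "f = (fa,fb,fz)" by (cases f) auto
  obtain w1 w2 w3 where ww: "Pact p i h (inv\<^bsub>Pgrp p i\<^esub> x) = (w1,w2,w3)"
    by (cases "Pact p i h (inv\<^bsub>Pgrp p i\<^esub> x)") auto
  have wc: "(w1,w2,w3) \<in> carrier (Pgrp p i)" using Pact_closed[OF p] ww by metis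
  have iv: "inv\<^bsub>Pgrp p i\<^esub> x = ((-a) mod int p, (-b) mod int p,
            (- z - int p^(i-1) * (a * ((-b) mod int p))) mod int p ^ i)"
    using Pinv[OF p i] x xx by simp
  have ic: "inv\<^bsub>Pgrp p i\<^esub> x \<in> carrier (Pgrp p i)"
    using group.inv_closed[OF Pgrp_group[OF p i] x] .
  have fr: "fa mod int p = fa" "fb mod int p = fb" using f by (auto simp: ff Pgrp_def)
  have "((a + fa) mod int p + w1) mod int p = fa mod int p"
       "((b + fb) mod int p + w2) mod int p = fb mod int p"
    using N fr unfolding ww by (auto simp: xx ff Pmul_def)
  then have "w1 mod int p = (fa - (a + fa) mod int p) mod int p"
            "w2 mod int p = (fb - (b + fb) mod int p) mod int p"
    by (auto dest!: modsolve)
  then have "w1 mod int p = (-a) mod int p" "w2 mod int p = (-b) mod int p"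
    by (simp_all add: mod_diff_right_eq)
  then have "w1 = (-a) mod int p" "w2 = (-b) mod int p" using wc by (auto simp: Pgrp_def)
  moreover obtain z' where iv2: "inv\<^bsub>Pgrp p i\<^esub> x = ((-a) mod int p, (-b) mod int p, z')"
    using iv by blast
  ultimately have "fst (Pact p i h ((-a) mod int p, (-b) mod int p, z')) = (-a) mod int p"
    "fst (snd (Pact p i h ((-a) mod int p, (-b) mod int p, z'))) = (-b) mod int p"
    using ww iv2 by simp_all
  then have "Pact p i h ((-a) mod int p, (-b) mod int p, z') = ((-a) mod int p, (-b) mod int p, z')"
    using Pact_fix ic iv2 by metis
  then show ?thesis using iv2 by simp
qed

lemma key:
  assumes p: "2 \<le> p" and i: "1 \<le> i" and x: "x \<in> carrier (Pgrp p i)" and f: "f \<in> carrier (Pgrp p i)"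
  shows "(Pmul p i (Pmul p i x f) (Pact p i h (inv\<^bsub>Pgrp p i\<^esub> x)) = f)
     \<longleftrightarrow> (Pmul p i x f = Pmul p i f (Pact p i h x))"
proof -
  interpret P: group "Pgrp p i" by (rule Pgrp_group[OF p i])
  have ic: "inv\<^bsub>Pgrp p i\<^esub> x \<in> carrier (Pgrp p i)" using x by simp
  show ?thesis
  proof
    assume N: "Pmul p i (Pmul p i x f) (Pact p i h (inv\<^bsub>Pgrp p i\<^esub> x)) = f"
    have f1: "Pact p i h (inv\<^bsub>Pgrp p i\<^esub> x) = inv\<^bsub>Pgrp p i\<^esub> x" by (rule N_fix[OF p i x f N])
    have f2: "Pact p i h x = x"
      using neg_fix[OF p i ic f1] x by simp
    have "x \<otimes>\<^bsub>Pgrp p i\<^esub> f \<otimes>\<^bsub>Pgrp p i\<^esub> inv\<^bsub>Pgrp p i\<^esub> x = f"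
      using N f1 by (simp add: Pmul_eq)
    then have "x \<otimes>\<^bsub>Pgrp p i\<^esub> f = f \<otimes>\<^bsub>Pgrp p i\<^esub> x"
      using x f by (metis P.inv_solve_right P.m_closed)
    then show "Pmul p i x f = Pmul p i f (Pact p i h x)" using f2 by (simp add: Pmul_eq)
  next
    assume C: "Pmul p i x f = Pmul p i f (Pact p i h x)"
    have f2: "Pact p i h x = x" by (rule C_fix[OF p x f C])
    have f1: "Pact p i h (inv\<^bsub>Pgrp p i\<^esub> x) = inv\<^bsub>Pgrp p i\<^esub> x" by (rule neg_fix[OF p i x f2])
    have "x \<otimes>\<^bsub>Pgrp p i\<^esub> f = f \<otimes>\<^bsub>Pgrp p i\<^esub> x" using C f2 by (simp add: Pmul_eq)
    then have "x \<otimes>\<^bsub>Pgrp p i\<^esub> f \<otimes>\<^bsub>Pgrp p i\<^esub> inv\<^bsub>Pgrp p i\<^esub> x = f"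
      using x f by (simp add: P.m_assoc)
    then show "Pmul p i (Pmul p i x f) (Pact p i h (inv\<^bsub>Pgrp p i\<^esub> x)) = f"
      using f1 by (simp add: Pmul_eq)
  qed
qed

lemma Gcar: "carrier (Ggrp p i) = carrier (Pgrp p i) \<times> carrier (SLgrp p)"
  by (simp add: Ggrp_def)

lemma Gone: "\<one>\<^bsub>Ggrp p i\<^esub> = ((0,0,0),(1,0,0,1))"
  by (simp add: Ggrp_def)

lemma Pone: "\<one>\<^bsub>Pgrp p i\<^esub> = (0,0,0)"
  by (simp add: Pgrp_def)

lemma Ginv:
  assumes p: "2 \<le> p" and i: "1 \<le> i" and x: "x \<in> carrier (Pgrp p i)"
  shows "inv\<^bsub>Ggrp p i\<^esub> (x, (1,0,0,1)) = (inv\<^bsub>Pgrp p i\<^esub> x, (1,0,0,1))"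
proof -
  interpret P: group "Pgrp p i" by (rule Pgrp_group[OF p i])
  have ic: "inv\<^bsub>Pgrp p i\<^esub> x \<in> carrier (Pgrp p i)" using x by simp
  have I: "(1,0,0,1) \<in> carrier (SLgrp p)" by (rule SL_one[OF p])
  have II: "SLmul p (1,0,0,1) (1,0,0,1) = (1,0,0,1)" using SL_idl[OF I] .
  let ?z = "(inv\<^bsub>Pgrp p i\<^esub> x, (1::int, 0::int, 0::int, 1::int))"
  have E: "?z \<in> carrier (Ggrp p i) \<and>
      (x, (1,0,0,1)) \<otimes>\<^bsub>Ggrp p i\<^esub> ?z = \<one>\<^bsub>Ggrp p i\<^esub> \<and>
      ?z \<otimes>\<^bsub>Ggrp p i\<^esub> (x, (1,0,0,1)) = \<one>\<^bsub>Ggrp p i\<^esub>"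
    using ic I II x P.r_inv P.l_inv
    by (simp add: Gcar Gmul Gone Pact_id[OF p] Pmul_eq[symmetric] Pone)
  have U: "y = ?z" if yas: "y \<in> carrier (Ggrp p i) \<and> (x, (1,0,0,1)) \<otimes>\<^bsub>Ggrp p i\<^esub> y = \<one>\<^bsub>Ggrp p i\<^esub> \<and>
      y \<otimes>\<^bsub>Ggrp p i\<^esub> (x, (1,0,0,1)) = \<one>\<^bsub>Ggrp p i\<^esub>" for y
  proof -
    obtain y1 g where yy: "y = (y1, g)" by (cases y) auto
    have y1: "y1 \<in> carrier (Pgrp p i)" and g: "g \<in> carrier (SLgrp p)"
      and e: "Pmul p i x (Pact p i (1,0,0,1) y1) = (0,0,0)" "SLmul p (1,0,0,1) g = (1,0,0,1)"
      using yas by (auto simp: yy Gcar Gmul Gone)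
    have "g = (1,0,0,1)" using e(2) SL_idl[OF g] by simp
    moreover have "x \<otimes>\<^bsub>Pgrp p i\<^esub> y1 = \<one>\<^bsub>Pgrp p i\<^esub>"
      using e(1) Pact_id[OF p y1] by (simp add: Pmul_eq Pone)
    then have "y1 = inv\<^bsub>Pgrp p i\<^esub> x"
      using P.inv_equality[OF P.inv_comm[OF _ x y1] x y1] by simp
    ultimately show "y = ?z" using yy by simp
  qed
  show ?thesis unfolding m_inv_def[of "Ggrp p i"]
    by (rule the_equality[where P="\<lambda>y. y \<in> carrier (Ggrp p i) \<and> (x, (1,0,0,1)) \<otimes>\<^bsub>Ggrp p i\<^esub> y = \<one>\<^bsub>Ggrp p i\<^esub> \<and>
      y \<otimes>\<^bsub>Ggrp p i\<^esub> (x, (1,0,0,1)) = \<one>\<^bsub>Ggrp p i\<^esub>", OF E U])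
qed

lemma charC:
  assumes p: "2 \<le> p" and i: "1 \<le> i" and H: "H \<subseteq> carrier (SLgrp p)"
    and psi: "\<forall>h\<in>H. \<psi> h \<in> carrier (Pgrp p i)"
  shows "CP p i ((\<lambda>h. (\<psi> h, h)) ` H) = {x \<in> carrier (Pgrp p i). \<forall>h\<in>H. Pmul p i x (\<psi> h) = Pmul p i (\<psi> h) (Pact p i h x)}"
proof -
  have "embP x \<otimes>\<^bsub>Ggrp p i\<^esub> (\<psi> h, h) = (\<psi> h, h) \<otimes>\<^bsub>Ggrp p i\<^esub> embP x
        \<longleftrightarrow> Pmul p i x (\<psi> h) = Pmul p i (\<psi> h) (Pact p i h x)" if "h \<in> H" for x h
  proof -
    have hc: "h \<in> carrier (SLgrp p)" using H that by auto
    have pc: "\<psi> h \<in> carrier (Pgrp p i)" using psi that by auto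
    show ?thesis by (simp add: embP_def Gmul Pact_id[OF p pc] SL_idl[OF hc] SL_idr[OF hc])
  qed
  then show ?thesis unfolding CP_def by auto
qed

lemma charN:
  assumes p: "2 \<le> p" and i: "1 \<le> i" and H: "H \<subseteq> carrier (SLgrp p)"
    and psi: "\<forall>h\<in>H. \<psi> h \<in> carrier (Pgrp p i)"
  shows "NP p i ((\<lambda>h. (\<psi> h, h)) ` H) = {x \<in> carrier (Pgrp p i). \<forall>h\<in>H. Pmul p i x (\<psi> h) = Pmul p i (\<psi> h) (Pact p i h x)}"
proof -
  let ?T = "(\<lambda>h. (\<psi> h, h)) ` H"
  have Tc: "?T \<subseteq> carrier (Ggrp p i)" using H psi by (auto simp: Gcar)
  have I: "(1,0,0,1) \<in> carrier (SLgrp p)" by (rule SL_one[OF p])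
  have cos: "embP x <#\<^bsub>Ggrp p i\<^esub> ?T #>\<^bsub>Ggrp p i\<^esub> inv\<^bsub>Ggrp p i\<^esub> (embP x)
      = (\<lambda>h. (Pmul p i (Pmul p i x (\<psi> h)) (Pact p i h (inv\<^bsub>Pgrp p i\<^esub> x)), h)) ` H"
    if x: "x \<in> carrier (Pgrp p i)" for x
  proof -
    have st: "embP x <#\<^bsub>Ggrp p i\<^esub> ?T #>\<^bsub>Ggrp p i\<^esub> inv\<^bsub>Ggrp p i\<^esub> (embP x)
       = (\<lambda>s. (embP x \<otimes>\<^bsub>Ggrp p i\<^esub> s) \<otimes>\<^bsub>Ggrp p i\<^esub> inv\<^bsub>Ggrp p i\<^esub> (embP x)) ` ?T"
      unfolding l_coset_def r_coset_def by blast
    have el: "(embP x \<otimes>\<^bsub>Ggrp p i\<^esub> (\<psi> h, h)) \<otimes>\<^bsub>Ggrp p i\<^esub> inv\<^bsub>Ggrp p i\<^esub> (embP x)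
        = (Pmul p i (Pmul p i x (\<psi> h)) (Pact p i h (inv\<^bsub>Pgrp p i\<^esub> x)), h)" if "h \<in> H" for h
    proof -
      have hc: "h \<in> carrier (SLgrp p)" using H that by auto
      have pc: "\<psi> h \<in> carrier (Pgrp p i)" using psi that by auto
      show ?thesis
        by (simp only: embP_def Ginv[OF p i x] Gmul Pact_id[OF p pc] SL_idl[OF hc] SL_idr[OF hc])
    qed
    show ?thesis unfolding st image_image by (rule image_cong[OF refl], rule el)
  qed
  have img: "((\<lambda>h. (F h, h)) ` H = ?T) \<longleftrightarrow> (\<forall>h\<in>H. F h = \<psi> h)" for F
  proof
    assume e: "(\<lambda>h. (F h, h)) ` H = ?T"
    show "\<forall>h\<in>H. F h = \<psi> h"
    proof
      fix h assume h: "h \<in> H"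
      then have "(F h, h) \<in> ?T" using e by blast
      then obtain k where "k \<in> H" "(F h, h) = (\<psi> k, k)" by blast
      then show "F h = \<psi> h" by auto
    qed
  next
    assume "\<forall>h\<in>H. F h = \<psi> h"
    then show "(\<lambda>h. (F h, h)) ` H = ?T" by (intro image_cong refl) simp
  qed
  have NPc: "x \<in> NP p i ?T \<longleftrightarrow> x \<in> carrier (Pgrp p i) \<and>
      (\<forall>h\<in>H. Pmul p i (Pmul p i x (\<psi> h)) (Pact p i h (inv\<^bsub>Pgrp p i\<^esub> x)) = \<psi> h)" for x
  proof (cases "x \<in> carrier (Pgrp p i)")
    case True
    have ec: "embP x \<in> carrier (Ggrp p i)" using True I by (simp add: Gcar embP_def)
    have "x \<in> NP p i ?T \<longleftrightarrow> embP x <#\<^bsub>Ggrp p i\<^esub> ?T #>\<^bsub>Ggrp p i\<^esub> inv\<^bsub>Ggrp p i\<^esub> (embP x) = ?T"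
      unfolding NP_def normalizer_def stabilizer_def using True ec Tc by simp
    also have "\<dots> \<longleftrightarrow> (\<forall>h\<in>H. Pmul p i (Pmul p i x (\<psi> h)) (Pact p i h (inv\<^bsub>Pgrp p i\<^esub> x)) = \<psi> h)"
      unfolding cos[OF True] by (rule img)
    finally show ?thesis using True by simp
  qed (simp add: NP_def)
  have eqv: "x \<in> NP p i ?T \<longleftrightarrow> x \<in> {x \<in> carrier (Pgrp p i). \<forall>h\<in>H. Pmul p i x (\<psi> h) = Pmul p i (\<psi> h) (Pact p i h x)}" for x
    proof (cases "x \<in> carrier (Pgrp p i)")
      case True
      have "\<forall>h\<in>H. (Pmul p i (Pmul p i x (\<psi> h)) (Pact p i h (inv\<^bsub>Pgrp p i\<^esub> x)) = \<psi> h) \<longleftrightarrow>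
         (Pmul p i x (\<psi> h) = Pmul p i (\<psi> h) (Pact p i h x))"
        using key[OF p i True] psi by blast
      then show ?thesis using NPc[of x] True by auto
    qed (simp add: NPc)
  show ?thesis using eqv by blast
qed

theorem mainTheorem14:
  fixes p i :: nat
    and H :: "(int \<times> int \<times> int \<times> int) set"
    and \<phi> :: "int \<times> int \<times> int \<times> int \<Rightarrow> int \<times> int \<times> int"
  assumes "prime p" and "odd p" and "1 \<le> i"
    and "subgroup H (SLgrp p)"
    and "\<forall>h\<in>H. \<phi> h \<in> carrier (Pgrp p i)"
    and "\<forall>h\<in>H. \<forall>k\<in>H. \<phi> (h \<otimes>\<^bsub>SLgrp p\<^esub> k) = \<phi> h \<otimes>\<^bsub>Pgrp p i\<^esub> Pact p i h (\<phi> k)"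
  shows "let S = (\<lambda>h. (\<phi> h, h)) ` H in
         NP p i S = CP p i S \<and> CP p i S \<subseteq> CP p i (embSL H)
         \<and> CP p i (embSL H) = NP p i (embSL H)"
proof -
  have p: "2 \<le> p" using assms(1) prime_ge_2_nat by blast
  have i: "1 \<le> i" by (rule assms(3))
  interpret P: group "Pgrp p i" by (rule Pgrp_group[OF p i])
  have H: "H \<subseteq> carrier (SLgrp p)" using assms(4) subgroup.subset by blast
  have phi: "\<forall>h\<in>H. \<phi> h \<in> carrier (Pgrp p i)" by (rule assms(5))
  have zc: "\<forall>h\<in>H. (\<lambda>_. (0::int,0::int,0::int)) h \<in> carrier (Pgrp p i)"
    using P.one_closed by (simp add: Pone)
  have E: "embSL H = (\<lambda>h. ((\<lambda>_. (0::int,0::int,0::int)) h, h)) ` H" by (simp add: embSL_def)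
  have C0: "CP p i (embSL H) = {x \<in> carrier (Pgrp p i). \<forall>h\<in>H. Pact p i h x = x}"
  proof -
    have "Pmul p i x (0,0,0) = Pmul p i (0,0,0) (Pact p i h x) \<longleftrightarrow> Pact p i h x = x"
      if "x \<in> carrier (Pgrp p i)" for x h
    proof -
      have "Pact p i h x \<in> carrier (Pgrp p i)" by (rule Pact_closed[OF p])
      then show ?thesis using that P.r_one P.l_one by (simp add: Pmul_eq Pone) metis
    qed
    then show ?thesis unfolding E charC[OF p i H zc] by auto
  qed
  show ?thesis unfolding Let_def
  proof (intro conjI)
    show "NP p i ((\<lambda>h. (\<phi> h, h)) ` H) = CP p i ((\<lambda>h. (\<phi> h, h)) ` H)"
      using charN[OF p i H phi] charC[OF p i H phi] by simp
    show "CP p i ((\<lambda>h. (\<phi> h, h)) ` H) \<subseteq> CP p i (embSL H)"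
      unfolding C0 charC[OF p i H phi] using C_fix[OF p] phi by blast
    show "CP p i (embSL H) = NP p i (embSL H)"
      unfolding E using charN[OF p i H zc] charC[OF p i H zc] by simp
  qed
qed

end
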